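(* Let $a>0$ and $n,k$ be integers with $1\le k\le n/2$, and put $u_0=a/k$. Let $a_0,\dots,a_n$ be integers. (A) Suppose there is a prime $p\ge k+2$ with $p\mid\prod_{i=1}^{k}(a+n-k+i)$, $p\nmid a_0a_n$, and $p\nmid\prod_{i=1}^{k}(a+i)$, and suppose that either $p\ge\min(2u_0,\,k+u_0)$, or ($p>2k$ and $p^2-p\ge a$). Then $f_{n,a}(x)$ has no factor of degree $k$ in $\mathbb{Q}[x]$. (B) Suppose there is a prime $p\ge k+2$ with $p\mid\prod_{i=1}^{k}(n-k+i)(a+n-k+i)$ and $p\nmid\prod_{i=1}^{k}(a+i)$, and suppose that either $p\ge\min(2u_0,\,k+u_0)$, or ($p>2k$ and $p^2-p\ge a$). Then $L_n^{(a)}(x)$ has no factor of degree $k$ in $\mathbb{Q}[x]$.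
   Context: Here $a$ is an integer. For integers $n\ge 1$, $a\ge 0$ and integers $a_0,\dots,a_n$, $f_{n,a}(x)=\sum_{j=0}^{n} a_j\frac{x^j}{(j+a)!}$. The generalised Laguerre polynomial is $L_n^{(\alpha)}(x)=\sum_{j=0}^{n}\frac{(n+\alpha)(n-1+\alpha)\cdots(j+1+\alpha)}{(n-j)!\,j!}(-x)^j$. *)

theory Defs
  imports "HOL-Computational_Algebra.Computational_Algebra"
begin

definition fna :: "nat \<Rightarrow> nat \<Rightarrow> (nat \<Rightarrow> int) \<Rightarrow> rat poly" where
  "fna n a c = (\<Sum>j\<le>n. monom (of_int (c j) / fact (j + a)) j)"

definition laguerre :: "nat \<Rightarrow> int \<Rightarrow> rat poly" where
  "laguerre n \<alpha> = (\<Sum>j\<le>n. monom ((\<Prod>i\<in>{j+1..n}. of_int (int i + \<alpha>))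
        / (fact (n - j) * fact j) * (-1) ^ j) j)"

end

theory Submission
  imports Defs
begin

lemma c1a: fixes p k d1 d0 j a :: int
  assumes "a = d1*p + d0" "0 \<le> d0" "d0 + k + 1 \<le> p" "k \<ge> 1" "d1 \<ge> 0" "j + a \<ge> p*p"
   "2*a \<le> p*k" "k + 2 \<le> p"
  shows "k*(d1+d0+j-1) < (p-1)*j"
proof -
  have pp: "p > 0" using assms by linarith
  have e1: "p*(2*d1) = 2*a - 2*d0" using assms(1) by (simp add: algebra_simps)
  have "p * (2*d1) \<le> p * k" using e1 assms(2,7) by linarith
  hence d1: "2*d1 \<le> k" using pp by (meson mult_left_le_imp_le)
  have "p * k < p * p" using pp assms by (intro mult_strict_left_mono) auto
  moreover have "a \<ge> 0" using assms pp by (simp add: mult_nonneg_nonneg)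
  ultimately have "a < p * p" using assms(7) by linarith
  hence j0: "j \<ge> 0" using assms by linarith
  have f1: "k*(2*d1) \<le> k*k" using d1 assms by (intro mult_left_mono) auto
  have f2: "k*d0 \<le> k*(p-k-1)" using assms by (intro mult_left_mono) auto
  have f3: "(k+1)*j \<le> (p-1)*j" using assms j0 by (intro mult_right_mono) auto
  have f4: "0 \<le> (2*p-k)*(p-k)" using assms by (intro mult_nonneg_nonneg) auto
  show ?thesis using f1 f2 f3 f4 assms by (simp only: algebra_simps; linarith)
qed

lemma c1b: fixes p k d1 d0 j a :: int
  assumes "a = d1*p + d0" "0 \<le> d0" "d0 + k + 1 \<le> p" "k \<ge> 1" "d1 \<ge> 0" "j + a \<ge> p*p"
   "k*k + a \<le> p*k" "k + 2 \<le> p"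
  shows "k*(d1+d0+j-1) < (p-1)*j"
proof -
  have pp: "p > 0" using assms by linarith
  have kk: "k*k > 0" using assms by simp
  have e: "p*d1 = a - d0" using assms(1) by (simp add: algebra_simps)
  have "p*d1 < p*k" using e assms(2,7) kk by linarith
  hence d1: "d1 \<le> k - 1" using pp by (smt (verit) mult_left_less_imp_less)
  have "(p-k)*(p-k) \<ge> 0" by simp
  moreover have "k*p \<ge> 0" using assms pp by simp
  ultimately have "p*p - p*k + k*k \<ge> 0" by (simp only: algebra_simps; linarith)
  hence j0: "j \<ge> 0" using assms kk by linarith
  have f1: "k*d1 \<le> k*(k-1)" using d1 assms by (intro mult_left_mono) auto
  have f2: "k*d0 \<le> k*(p-k-1)" using assms by (intro mult_left_mono) auto
  have f3: "(k+1)*j \<le> (p-1)*j" using assms j0 by (intro mult_right_mono) auto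
  have f4: "0 \<le> (p-k)*(p-k)" by simp
  show ?thesis using f1 f2 f3 f4 assms by (simp only: algebra_simps; linarith)
qed

lemma c2: fixes p k d1 d0 j a :: int
  assumes "a = d1*p + d0" "0 \<le> d0" "d0 + k + 1 \<le> p" "k \<ge> 1" "d1 \<ge> 0" "j + a \<ge> p*p"
   "2*k < p" "a + p \<le> p*p"
  shows "k*(d1+d0+j-1) < (p-1)*j"
proof (cases "d1 \<ge> p - 1")
  case True
  have pp: "p > 0" using assms by linarith
  have "p*(p-1) \<le> p*d1" using True pp by (intro mult_left_mono) auto
  hence "d0 = 0" "p * d1 \<le> p*(p-1)" using assms by (simp_all add: algebra_simps)
  hence "d1 \<le> p - 1" using pp by (meson mult_left_le_imp_le)
  hence d1: "d1 = p - 1" using True by simp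
  hence j: "j \<ge> p" using assms \<open>d0 = 0\<close> by (simp add: algebra_simps)
  have f1: "(2*k)*j \<le> (p-1)*j" using assms j pp by (intro mult_right_mono) auto
  have f2: "k*p \<le> k*j" using assms j by (intro mult_left_mono) auto
  have "k*(d1+d0+j-1) = k*p + k*j - 2*k" unfolding d1 \<open>d0 = 0\<close> by (simp add: algebra_simps)
  moreover have "(p-1)*j = p*j - j" by (simp add: algebra_simps)
  ultimately show ?thesis using f1 f2 assms(4) by (simp only: algebra_simps; linarith)
next
  case False
  have pp: "p > 0" using assms by linarith
  have "p*d1 \<le> p*(p-2)" using False pp by (intro mult_left_mono) auto
  hence j: "j \<ge> p + k + 1" using assms by (simp add: algebra_simps)
  have F1: "(p-1-k)*(p+k+1) \<le> (p-1-k)*j" using assms j by (intro mult_left_mono) auto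
  have F2: "k*d1 \<le> k*(p-2)" using False assms by (intro mult_left_mono) auto
  have F3: "k*d0 \<le> k*(p-k-1)" using assms by (intro mult_left_mono) auto
  have F4: "p*1 \<le> p*(p-2*k)" using assms by (intro mult_left_mono) auto
  show ?thesis using F1 F2 F3 F4 assms by (simp only: algebra_simps; linarith)
qed

lemma nu_fact_rec:
  assumes p: "prime (p::nat)"
  shows "multiplicity p (fact m :: nat) = m div p + multiplicity p (fact (m div p) :: nat)"
proof (induction m)
  case 0 show ?case by simp
next
  case (Suc m)
  have pe: "prime_elem p" using p by simp
  have p0: "p > 0" using p prime_gt_0_nat by blast
  have fs: "multiplicity p (fact (Suc m) :: nat) = multiplicity p (Suc m) + multiplicity p (fact m :: nat)"
  proof -
    have "(fact (Suc m) :: nat) = Suc m * fact m" by (metis fact_Suc of_nat_id)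
    thus ?thesis using prime_elem_multiplicity_mult_distrib[OF pe, of "Suc m" "fact m :: nat"] by simp
  qed
  show ?case
  proof (cases "p dvd Suc m")
    case True
    then obtain q where q: "Suc m = p * q" by blast
    have q0: "q > 0" using q by (cases q) auto
    have d1: "Suc m div p = q" using q p0 by simp
    have d2: "m div p = q - 1" using q p0
      by (metis div_mult_self1_is_m nat.simps(3) modulo_nat_def mult.commute div_Suc diff_self_eq_0 diff_Suc_1)
    have mq: "multiplicity p (Suc m) = 1 + multiplicity p q"
      using q q0 p0 by (simp add: prime_elem_multiplicity_mult_distrib[OF pe] multiplicity_prime[OF pe])
    have fq0: "fact q = q * (fact (q - 1) :: nat)" using q0 by (simp add: fact_reduce)
    have fq: "multiplicity p (fact q :: nat) = multiplicity p q + multiplicity p (fact (q - 1) :: nat)"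
      unfolding fq0 using q0 by (simp add: prime_elem_multiplicity_mult_distrib[OF pe])
    show ?thesis using fs Suc.IH d1 d2 mq fq q0 by simp
  next
    case False
    have "Suc m div p = m div p" using False by (simp add: div_Suc dvd_eq_mod_eq_0)
    moreover have "multiplicity p (Suc m) = 0" using False by (simp add: not_dvd_imp_multiplicity_0)
    ultimately show ?thesis using fs Suc.IH by simp
  qed
qed

lemma nu_fact_bound:
  assumes p: "prime (p::nat)"
  shows "m \<ge> 1 \<Longrightarrow> (p - 1) * multiplicity p (fact m :: nat) < m"
proof (induction m rule: less_induct)
  case (less m)
  have p1: "p > 1" using p prime_gt_1_nat by blast
  show ?case
  proof (cases "m < p")
    case True
    hence "m div p = 0" by simp
    hence "multiplicity p (fact m :: nat) = 0" using nu_fact_rec[OF p, of m] by simp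
    thus ?thesis using less.prems by simp
  next
    case False
    define q where "q = m div p"
    have q1: "q \<ge> 1" using False p1 unfolding q_def by (metis div_le_mono div_self not_less not_one_le_zero zero_less_one le_less)  
    have "q < m" unfolding q_def using p1 less.prems by simp
    hence IH: "(p - 1) * multiplicity p (fact q :: nat) < q" using less.IH q1 by blast
    have "(p - 1) * multiplicity p (fact m :: nat) = (p - 1) * q + (p - 1) * multiplicity p (fact q :: nat)"
      using nu_fact_rec[OF p, of m] unfolding q_def by (simp add: algebra_simps)
    also have "\<dots> < (p - 1) * q + q" using IH by simp
    also have "\<dots> = p * q" using p1 by (simp add: algebra_simps)
    also have "\<dots> \<le> m" unfolding q_def by simp
    finally show ?thesis .
  qed
qed

lemma nu_fact_small:
  assumes p: "prime (p::nat)" and m: "m < p * p"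
  shows "multiplicity p (fact m :: nat) = m div p"
proof -
  have p0: "p > 0" using p prime_gt_0_nat by blast
  have "m div p < p" using m p0 by (simp add: div_less_iff_less_mult)
  hence "\<not> p dvd (fact (m div p) :: nat)" using p prime_dvd_fact_iff by auto
  hence "multiplicity p (fact (m div p) :: nat) = 0" by (simp add: not_dvd_imp_multiplicity_0)
  thus ?thesis using nu_fact_rec[OF p, of m] by simp
qed

lemma fact_split: "fact (a + j) = (fact a :: nat) * (\<Prod>i=1..j. a + i)"
proof (induction j)
  case 0 show ?case by simp
next
  case (Suc j)
  have "(\<Prod>i=1..Suc j. a + i) = (\<Prod>i=1..j. a + i) * (a + Suc j)"
    by (simp add: prod.nat_ivl_Suc')
  thus ?case using Suc by (simp add: algebra_simps)
qed

lemma nt_main: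
  fixes p k a j :: nat
  assumes p: "prime p" and k: "1 \<le> k" and pk: "k + 2 \<le> p"
    and nd: "\<forall>i\<in>{1..k}. \<not> p dvd a + i"
    and br: "2*a \<le> p*k \<or> k*k + a \<le> p*k \<or> (2*k < p \<and> a + p \<le> p*p)"
    and j: "1 \<le> j"
  shows "k * multiplicity p (\<Prod>i=1..j. a + i) < j"
proof -
  let ?S = "multiplicity p (\<Prod>i=1..j. a + i)"
  define d1 where "d1 = a div p"
  define d0 where "d0 = a mod p"
  have p0: "p > 0" using pk by simp
  have ad: "a = d1 * p + d0" unfolding d1_def d0_def by simp
  have d0p: "d0 < p" unfolding d0_def using p0 by simp
  have d0k: "d0 + k + 1 \<le> p"
  proof (rule ccontr)
    assume "\<not> ?thesis"
    hence "p \<le> d0 + k" by simp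
    define i where "i = p - d0"
    have i: "i \<in> {1..k}" unfolding i_def using d0p \<open>p \<le> d0 + k\<close> by auto
    have "a + i = (d1 + 1) * p" unfolding i_def using ad d0p by (simp add: algebra_simps)
    hence "p dvd a + i" by simp
    thus False using nd i by blast
  qed
  have kp: "k < p" using pk by simp
  have app: "a < p * p"
  proof -
    have "p * k < p * p" using kp p0 by simp
    moreover have "k*k > 0" using k by simp
    ultimately show ?thesis using br by linarith
  qed
  have pe: "prime_elem p" using p by simp
  have P0: "(\<Prod>i=1..j. a + i) \<noteq> 0" by simp
  have E: "multiplicity p (fact (a + j) :: nat) = d1 + ?S"
    using fact_split[of a j] prime_elem_multiplicity_mult_distrib[OF pe _ P0, of "fact a"]
      nu_fact_small[OF p app] unfolding d1_def by simp
  show ?thesis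
  proof (cases "a + j < p * p")
    case True
    have "multiplicity p (fact (a + j) :: nat) = (a + j) div p" using nu_fact_small[OF p True] .
    also have "(a + j) div p = d1 + (d0 + j) div p"
    proof -
      have e: "a + j = (d0 + j) + d1 * p" unfolding ad by simp
      have "((d0 + j) + d1 * p) div p = d1 + (d0 + j) div p"
        using div_mult_self1[of p "d0 + j" d1] p0 by linarith
      thus ?thesis by (simp only: e)
    qed
    finally have S: "?S = (d0 + j) div p" using E by simp
    define q where "q = (d0 + j) div p"
    have qp: "q * p \<le> d0 + j" unfolding q_def by (metis div_mult_mod_eq le_add1)
    show ?thesis
    proof (cases "q = 0")
      case True thus ?thesis using S j q_def by simp
    next
      case False
      have "(p - k) * 1 \<le> (p - k) * q" using False by (intro mult_le_mono2) simp
      hence "p - k \<le> p * q - k * q" by (simp add: diff_mult_distrib)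
      moreover have "k * q \<le> p * q" using kp by simp
      ultimately have "k * q + p \<le> p * q + k" using kp by linarith
      moreover have "p * q \<le> d0 + j" using qp by (simp add: mult.commute)
      ultimately have "k * q < j" using d0k by linarith
      thus ?thesis using S unfolding q_def by simp
    qed
  next
    case False
    have B: "(p - 1) * (d1 + ?S) < a + j"
      using nu_fact_bound[OF p, of "a + j"] j E by simp
    have C: "int k * (int d1 + int d0 + int j - 1) < (int p - 1) * int j"
    proof -
      have base: "int a = int d1 * int p + int d0" "0 \<le> int d0" "int d0 + int k + 1 \<le> int p"
        "int k \<ge> 1" "int d1 \<ge> 0" "int j + int a \<ge> int p * int p"
        using ad d0k k False by (simp_all add: of_nat_mult[symmetric] del: of_nat_mult)
      consider "2*a \<le> p*k" | "k*k + a \<le> p*k" | "2*k < p" "a + p \<le> p*p" using br by blast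
      thus ?thesis
      proof cases
        case 1
        hence "2 * int a \<le> int p * int k" by (simp add: of_nat_mult[symmetric] del: of_nat_mult)
        thus ?thesis using c1a[OF base] pk by simp
      next
        case 2
        hence "int k * int k + int a \<le> int p * int k" by (simp add: of_nat_mult[symmetric] del: of_nat_mult)
        thus ?thesis using c1b[OF base] pk by simp
      next
        case 3
        hence "2 * int k < int p" "int a + int p \<le> int p * int p"
          by (simp_all add: of_nat_mult[symmetric] del: of_nat_mult)
        thus ?thesis using c2[OF base] by simp
      qed
    qed
    have B': "(int p - 1) * (int d1 + int ?S) < int d1 * int p + int d0 + int j"
    proof -
      have "int ((p - 1) * (d1 + ?S)) < int (a + j)" using B by linarith
      thus ?thesis using p0 ad by (simp add: of_nat_diff)
    qed
    hence B2: "(int p - 1) * int ?S \<le> int d1 + int d0 + int j - 1" by (simp add: algebra_simps)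
    have "int k * ((int p - 1) * int ?S) \<le> int k * (int d1 + int d0 + int j - 1)"
      using B2 by (intro mult_left_mono) auto
    hence "(int p - 1) * (int k * int ?S) < (int p - 1) * int j" using C by (simp add: algebra_simps)
    hence "int k * int ?S < int j" using p0 pk by (simp add: mult_less_cancel_left)
    thus ?thesis by (simp add: of_nat_mult[symmetric] del: of_nat_mult)
  qed
qed


definition wt :: "nat \<Rightarrow> nat \<Rightarrow> nat \<Rightarrow> int poly \<Rightarrow> nat \<Rightarrow> nat" where
  "wt p \<alpha> \<beta> P i = \<alpha> * multiplicity (int p) (coeff P i) + \<beta> * i"

lemma pnu: "prime p \<Longrightarrow> \<not> is_unit (int p)"
  using prime_gt_1_nat by fastforce

lemma mult_nu:
  assumes "prime p" "x \<noteq> 0" "y \<noteq> 0"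
  shows "multiplicity (int p) (x * y) = multiplicity (int p) x + multiplicity (int p) y"
  using assms by (intro prime_elem_multiplicity_mult_distrib) auto

lemma weight_lower:
  assumes p: "prime p" and al: "\<alpha> > 0"
    and hG: "\<forall>i. coeff G i \<noteq> 0 \<longrightarrow> T \<le> wt p \<alpha> \<beta> G i"
    and hH: "\<forall>i. coeff H i \<noteq> 0 \<longrightarrow> T' \<le> wt p \<alpha> \<beta> H i"
    and nz: "coeff (G * H) m \<noteq> 0"
  shows "T + T' \<le> wt p \<alpha> \<beta> (G * H) m"
proof (rule ccontr)
  let ?e = "multiplicity (int p) (coeff (G * H) m)"
  assume "\<not> ?thesis"
  hence lt: "\<alpha> * ?e + \<beta> * m < T + T'" by (simp add: wt_def)
  have "(int p) ^ (?e + 1) dvd (\<Sum>i\<le>m. coeff G i * coeff H (m - i))"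
  proof (rule dvd_sum)
    fix i assume i: "i \<in> {..m}"
    show "(int p) ^ (?e + 1) dvd coeff G i * coeff H (m - i)"
    proof (cases "coeff G i = 0 \<or> coeff H (m - i) = 0")
      case True thus ?thesis by auto
    next
      case False
      hence a: "T \<le> wt p \<alpha> \<beta> G i" "T' \<le> wt p \<alpha> \<beta> H (m - i)" using hG hH by auto
      have bb: "\<beta> * i + \<beta> * (m - i) = \<beta> * m" using i by (simp flip: add_mult_distrib2)
      have "\<alpha> * ?e < \<alpha> * (multiplicity (int p) (coeff G i) + multiplicity (int p) (coeff H (m - i)))"
        using a lt bb unfolding wt_def add_mult_distrib2 by linarith
      hence "?e + 1 \<le> multiplicity (int p) (coeff G i) + multiplicity (int p) (coeff H (m - i))"
        using mult_less_cancel1 by fastforce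
      hence "?e + 1 \<le> multiplicity (int p) (coeff G i * coeff H (m - i))"
        using mult_nu[OF p] False by auto
      thus ?thesis by (rule multiplicity_dvd')
    qed
  qed
  hence "(int p) ^ (?e + 1) dvd coeff (G * H) m" by (simp add: coeff_mult)
  hence "?e + 1 \<le> ?e" using multiplicity_geI[OF nz pnu[OF p]] by blast
  thus False by simp
qed

lemma weight_exact:
  assumes p: "prime p" and al: "\<alpha> > 0"
    and gu: "coeff G u \<noteq> 0" "wt p \<alpha> \<beta> G u = T"
    and hG: "\<forall>i. coeff G i \<noteq> 0 \<longrightarrow> T \<le> wt p \<alpha> \<beta> G i"
    and hG2: "\<forall>i>u. coeff G i \<noteq> 0 \<longrightarrow> T < wt p \<alpha> \<beta> G i"
    and hu: "coeff H u' \<noteq> 0" "wt p \<alpha> \<beta> H u' = T'"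
    and hH: "\<forall>i. coeff H i \<noteq> 0 \<longrightarrow> T' \<le> wt p \<alpha> \<beta> H i"
    and hH2: "\<forall>i>u'. coeff H i \<noteq> 0 \<longrightarrow> T' < wt p \<alpha> \<beta> H i"
  shows "coeff (G * H) (u + u') \<noteq> 0 \<and> wt p \<alpha> \<beta> (G * H) (u + u') = T + T'"
proof -
  let ?m = "u + u'"
  let ?nu = "multiplicity (int p)"
  let ?e = "?nu (coeff G u) + ?nu (coeff H u')"
  have me: "?nu (coeff G u * coeff H u') = ?e" using mult_nu[OF p gu(1) hu(1)] .
  have wte: "\<alpha> * ?e + \<beta> * ?m = T + T'" using gu(2) hu(2) by (simp add: wt_def algebra_simps)
  have rest: "(int p) ^ (?e + 1) dvd (\<Sum>i\<in>{..?m} - {u}. coeff G i * coeff H (?m - i))"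
  proof (rule dvd_sum)
    fix i assume i: "i \<in> {..?m} - {u}"
    show "(int p) ^ (?e + 1) dvd coeff G i * coeff H (?m - i)"
    proof (cases "coeff G i = 0 \<or> coeff H (?m - i) = 0")
      case True thus ?thesis by auto
    next
      case False
      have "T + T' < wt p \<alpha> \<beta> G i + wt p \<alpha> \<beta> H (?m - i)"
      proof (cases "i > u")
        case True
        thus ?thesis using hG2 hH False by fastforce
      next
        case False2: False
        hence "i < u" using i by auto
        hence "?m - i > u'" by auto
        thus ?thesis using hG hH2 False by fastforce
      qed
      moreover have bb: "\<beta> * i + \<beta> * (?m - i) = \<beta> * ?m" using i by (simp flip: add_mult_distrib2)
      ultimately have "\<alpha> * ?e < \<alpha> * (?nu (coeff G i) + ?nu (coeff H (?m - i)))"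
        using wte unfolding wt_def add_mult_distrib2 by linarith
      hence "?e + 1 \<le> ?nu (coeff G i) + ?nu (coeff H (?m - i))"
        using mult_less_cancel1 by fastforce
      hence "?e + 1 \<le> ?nu (coeff G i * coeff H (?m - i))"
        using mult_nu[OF p] False by auto
      thus ?thesis by (rule multiplicity_dvd')
    qed
  qed
  have split: "coeff (G * H) ?m = coeff G u * coeff H u' + (\<Sum>i\<in>{..?m} - {u}. coeff G i * coeff H (?m - i))"
    unfolding coeff_mult by (subst sum.remove[of _ u]) auto
  have nmain: "\<not> (int p) ^ (?e + 1) dvd coeff G u * coeff H u'"
  proof
    assume "(int p) ^ (?e + 1) dvd coeff G u * coeff H u'"
    hence "?e + 1 \<le> ?e" using multiplicity_geI[OF _ pnu[OF p], of "coeff G u * coeff H u'"] gu(1) hu(1) me by auto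
    thus False by simp
  qed
  have nd: "\<not> (int p) ^ (?e + 1) dvd coeff (G * H) ?m"
    using nmain rest unfolding split using dvd_add_left_iff by blast
  hence nz: "coeff (G * H) ?m \<noteq> 0" by auto
  have d1: "(int p) ^ ?e dvd coeff G u * coeff H u'" using multiplicity_dvd[of "int p"] me by metis
  have d2: "(int p) ^ ?e dvd (\<Sum>i\<in>{..?m} - {u}. coeff G i * coeff H (?m - i))"
    using rest by (meson dvd_trans le_add1 le_imp_power_dvd)
  have "(int p) ^ ?e dvd coeff (G * H) ?m" unfolding split using d1 d2 by simp
  hence ge: "?e \<le> ?nu (coeff (G * H) ?m)" using multiplicity_geI[OF nz pnu[OF p]] by blast
  have lt: "?nu (coeff (G * H) ?m) < ?e + 1" using multiplicity_lessI[OF nz pnu[OF p]] nd by blast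
  have "?nu (coeff (G * H) ?m) = ?e" using ge lt by simp
  thus ?thesis using nz wte by (simp add: wt_def)
qed

lemma weight_exists:
  assumes "P \<noteq> 0"
  shows "\<exists>u T. coeff P u \<noteq> 0 \<and> wt p \<alpha> \<beta> P u = T \<and> (\<forall>i. coeff P i \<noteq> 0 \<longrightarrow> T \<le> wt p \<alpha> \<beta> P i)
     \<and> (\<forall>i>u. coeff P i \<noteq> 0 \<longrightarrow> T < wt p \<alpha> \<beta> P i)"
proof -
  define A where "A = {i. coeff P i \<noteq> 0}"
  have fA: "finite A" unfolding A_def
    by (rule finite_subset[of _ "{..degree P}"]) (auto intro: le_degree)
  have nA: "A \<noteq> {}" using assms unfolding A_def by (metis (mono_tags) empty_Collect_eq leading_coeff_0_iff)
  define T where "T = Min (wt p \<alpha> \<beta> P ` A)"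
  define B where "B = {i\<in>A. wt p \<alpha> \<beta> P i = T}"
  have fB: "finite B" using fA unfolding B_def by auto
  have "T \<in> wt p \<alpha> \<beta> P ` A" unfolding T_def using fA nA by (intro Min_in) auto
  hence nB: "B \<noteq> {}" unfolding B_def by auto
  define u where "u = Max B"
  have uB: "u \<in> B" unfolding u_def using fB nB by (rule Max_in)
  have lo: "\<forall>i. coeff P i \<noteq> 0 \<longrightarrow> T \<le> wt p \<alpha> \<beta> P i"
    unfolding T_def A_def using fA A_def by (auto intro: Min_le)
  have "\<forall>i>u. coeff P i \<noteq> 0 \<longrightarrow> T < wt p \<alpha> \<beta> P i"
  proof (intro allI impI)
    fix i assume "i > u" "coeff P i \<noteq> 0"
    moreover have "i \<notin> B" using \<open>i > u\<close> Max_ge[OF fB] unfolding u_def by fastforce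
    ultimately show "T < wt p \<alpha> \<beta> P i" using lo unfolding B_def A_def by force
  qed
  thus ?thesis using uB lo unfolding B_def A_def by blast
qed



lemma core:
  fixes G H :: "int poly"
  assumes p: "prime p" and k: "1 \<le> k" "k \<le> n"
    and dR: "degree (G * H) = n" and dG: "degree G = k"
    and R0: "coeff (G * H) 0 \<noteq> 0"
    and Hw: "\<forall>j\<ge>1. coeff (G * H) j \<noteq> 0 \<longrightarrow>
               k * multiplicity (int p) (coeff (G * H) 0) < k * multiplicity (int p) (coeff (G * H) j) + j"
    and Hn: "\<forall>j\<le>n - k. coeff (G * H) j \<noteq> 0 \<longrightarrow>
               multiplicity (int p) (coeff (G * H) n) < multiplicity (int p) (coeff (G * H) j)"
  shows False
proof -
  let ?nu = "multiplicity (int p)"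
  have R: "G * H \<noteq> 0" using R0 by auto
  hence G0: "G \<noteq> 0" and H0: "H \<noteq> 0" by auto
  have dH: "degree H = n - k" using dR dG degree_mult_eq[OF G0 H0] by simp
  obtain u T where u: "coeff G u \<noteq> 0" "wt p k 1 G u = T" "\<forall>i. coeff G i \<noteq> 0 \<longrightarrow> T \<le> wt p k 1 G i"
     "\<forall>i>u. coeff G i \<noteq> 0 \<longrightarrow> T < wt p k 1 G i"
    using weight_exists[OF G0] by blast
  obtain u' T' where u': "coeff H u' \<noteq> 0" "wt p k 1 H u' = T'" "\<forall>i. coeff H i \<noteq> 0 \<longrightarrow> T' \<le> wt p k 1 H i"
     "\<forall>i>u'. coeff H i \<noteq> 0 \<longrightarrow> T' < wt p k 1 H i"
    using weight_exists[OF H0] by blast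
  have kp: "k > 0" using k by simp
  have ex: "coeff (G * H) (u + u') \<noteq> 0 \<and> wt p k 1 (G * H) (u + u') = T + T'"
    using weight_exact[OF p kp u u'] .
  have lo: "T + T' \<le> wt p k 1 (G * H) 0"
    using weight_lower[OF p kp u(3) u'(3) R0] .
  have u0: "u = 0"
  proof (rule ccontr)
    assume "u \<noteq> 0"
    hence "u + u' \<ge> 1" by simp
    hence "k * ?nu (coeff (G * H) 0) < wt p k 1 (G * H) (u + u')"
    proof -
      have "k * ?nu (coeff (G * H) 0) < k * ?nu (coeff (G * H) (u + u')) + (u + u')"
        using Hw ex \<open>u + u' \<ge> 1\<close> by blast
      thus ?thesis by (simp add: wt_def)
    qed
    thus False using ex lo by (simp add: wt_def)
  qed
  have gz: "coeff G 0 \<noteq> 0" using u u0 by simp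
  have gmin: "\<forall>i. coeff G i \<noteq> 0 \<longrightarrow> ?nu (coeff G 0) \<le> ?nu (coeff G i)"
  proof (intro allI impI)
    fix i assume gi: "coeff G i \<noteq> 0"
    show "?nu (coeff G 0) \<le> ?nu (coeff G i)"
    proof (cases "i = 0")
      case True thus ?thesis by simp
    next
      case False
      have "i \<le> k" using gi dG le_degree by blast
      have "k * ?nu (coeff G 0) < k * ?nu (coeff G i) + i"
        using u(4) u(2) u0 False gi by (simp add: wt_def)
      also have "\<dots> \<le> k * (?nu (coeff G i) + 1)" using \<open>i \<le> k\<close> by simp
      finally have "?nu (coeff G 0) < ?nu (coeff G i) + 1" using mult_less_cancel1 by blast
      thus ?thesis by simp
    qed
  qed
  define N where "N = n + 1"
  have Np: "N > 0" unfolding N_def by simp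
  have g2: "coeff G 0 \<noteq> 0" "wt p N 1 G 0 = N * ?nu (coeff G 0)"
     "\<forall>i. coeff G i \<noteq> 0 \<longrightarrow> N * ?nu (coeff G 0) \<le> wt p N 1 G i"
     "\<forall>i>0. coeff G i \<noteq> 0 \<longrightarrow> N * ?nu (coeff G 0) < wt p N 1 G i"
  proof -
    have a: "\<forall>i. coeff G i \<noteq> 0 \<longrightarrow> N * ?nu (coeff G 0) \<le> N * ?nu (coeff G i)"
      using gmin by (simp add: mult_le_mono2)
    show "coeff G 0 \<noteq> 0" using gz .
    show "wt p N 1 G 0 = N * ?nu (coeff G 0)" by (simp add: wt_def)
    show "\<forall>i. coeff G i \<noteq> 0 \<longrightarrow> N * ?nu (coeff G 0) \<le> wt p N 1 G i"
      using a by (simp add: wt_def add_increasing2)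
    show "\<forall>i>0. coeff G i \<noteq> 0 \<longrightarrow> N * ?nu (coeff G 0) < wt p N 1 G i"
    proof (intro allI impI)
      fix i :: nat assume "i > 0" "coeff G i \<noteq> 0"
      hence b: "N * ?nu (coeff G 0) \<le> N * ?nu (coeff G i)" using a by blast
      show "N * ?nu (coeff G 0) < wt p N 1 G i" unfolding wt_def using b \<open>i > 0\<close> by linarith
    qed
  qed
  obtain v V where v: "coeff H v \<noteq> 0" "wt p N 1 H v = V" "\<forall>i. coeff H i \<noteq> 0 \<longrightarrow> V \<le> wt p N 1 H i"
     "\<forall>i>v. coeff H i \<noteq> 0 \<longrightarrow> V < wt p N 1 H i"
    using weight_exists[OF H0] by blast
  have ex2: "coeff (G * H) v \<noteq> 0 \<and> wt p N 1 (G * H) v = N * ?nu (coeff G 0) + V"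
    using weight_exact[OF p Np g2 v] by simp
  have Rn: "coeff (G * H) n \<noteq> 0" using R dR by (metis leading_coeff_0_iff)
  have lo2: "N * ?nu (coeff G 0) + V \<le> wt p N 1 (G * H) n"
    using weight_lower[OF p Np g2(3) v(3) Rn] .
  have "v \<le> n - k" using le_degree[OF v(1)] dH by simp
  hence "?nu (coeff (G * H) n) + 1 \<le> ?nu (coeff (G * H) v)" using Hn ex2 by auto
  hence "N * (?nu (coeff (G * H) n) + 1) \<le> N * ?nu (coeff (G * H) v)" by (rule mult_le_mono2)
  also have "\<dots> \<le> wt p N 1 (G * H) v" by (simp add: wt_def)
  also have "\<dots> \<le> N * ?nu (coeff (G * H) n) + n" using ex2 lo2 by (simp add: wt_def)
  finally show False unfolding N_def by (simp add: algebra_simps)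
qed



lemma coeff_sum_monom_if:
  "coeff (\<Sum>j\<le>n. monom (f j) j) m = (if m \<le> n then f m else 0)"
  by (simp add: coeff_sum)

lemma map_of_int_mult:
  "map_poly (of_int :: int \<Rightarrow> rat) (P * Q) = map_poly of_int P * map_poly of_int Q"
  by (intro poly_eqI) (simp add: coeff_map_poly coeff_mult)

lemma map_of_int_smult:
  "map_poly (of_int :: int \<Rightarrow> rat) (smult d P) = smult (of_int d) (map_poly of_int P)"
  by (intro poly_eqI) (simp add: coeff_map_poly)

lemma map_of_int_inj:
  assumes "map_poly (of_int :: int \<Rightarrow> rat) P = map_poly of_int Q"
  shows "P = Q"
proof (intro poly_eqI)
  fix i
  have "coeff (map_poly (of_int :: int \<Rightarrow> rat) P) i = coeff (map_poly of_int Q) i" using assms by simp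
  thus "coeff P i = coeff Q i" by (simp add: coeff_map_poly)
qed

lemma rat_clear:
  fixes g :: "rat poly"
  shows "\<exists>d G. d \<noteq> (0::int) \<and> map_poly of_int G = smult (of_int d) g"
proof -
  define d where "d = (\<Prod>i\<le>degree g. snd (quotient_of (coeff g i)))"
  have d0: "d \<noteq> 0" unfolding d_def using quotient_of_denom_pos' by (simp add: less_imp_neq[symmetric])
  have int: "\<forall>i. of_int d * coeff g i \<in> \<int>"
  proof
    fix i
    show "of_int d * coeff g i \<in> \<int>"
    proof (cases "i \<le> degree g")
      case False thus ?thesis by (simp add: coeff_eq_0)
    next
      case True
      obtain nu de where q: "quotient_of (coeff g i) = (nu, de)" by force
      have de: "de > 0" using quotient_of_denom_pos[OF q] .
      have "de dvd d" unfolding d_def using True q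
        by (metis (no_types, lifting) atMost_iff dvd_prodI finite_atMost snd_conv)
      then obtain e where e: "d = de * e" by blast
      have "of_int d * coeff g i = of_int d * (of_int nu / of_int de)" using quotient_of_div[OF q] by simp
      also have "\<dots> = of_int (e * nu)" using e de by simp
      finally show ?thesis by simp
    qed
  qed
  define G where "G = map_poly (\<lambda>x. \<lfloor>x\<rfloor>) (smult (of_int d) g)"
  have "map_poly of_int G = smult (of_int d) g"
  proof (intro poly_eqI)
    fix i
    have "coeff G i = \<lfloor>of_int d * coeff g i\<rfloor>" unfolding G_def by (simp add: coeff_map_poly)
    thus "coeff (map_poly of_int G) i = coeff (smult (of_int d) g) i"
      using int by (simp add: coeff_map_poly)
  qed
  thus ?thesis using d0 by blast
qed

lemma no_factor:
  fixes F :: "int poly" and f :: "rat poly"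
  assumes Ff: "map_poly of_int F = smult K f" and K: "K \<noteq> 0"
    and p: "prime p" and k: "1 \<le> k" "k \<le> n" and dF: "degree F = n"
    and F0: "coeff F 0 \<noteq> 0"
    and Hw: "\<forall>j\<ge>1. coeff F j \<noteq> 0 \<longrightarrow>
               k * multiplicity (int p) (coeff F 0) < k * multiplicity (int p) (coeff F j) + j"
    and Hn: "\<forall>j\<le>n - k. coeff F j \<noteq> 0 \<longrightarrow>
               multiplicity (int p) (coeff F n) < multiplicity (int p) (coeff F j)"
  shows "\<not> (\<exists>g. degree g = k \<and> g dvd f)"
proof
  assume "\<exists>g. degree g = k \<and> g dvd f"
  then obtain g where g: "degree g = k" and "g dvd f" by blast
  then obtain h where fgh: "f = g * h" by (elim dvdE)
  obtain d1 G where G: "d1 \<noteq> 0" "map_poly of_int G = smult (of_int d1) g" using rat_clear by blast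
  obtain d2 H where H: "d2 \<noteq> 0" "map_poly of_int H = smult (of_int d2) (smult K h)" using rat_clear by blast
  have "map_poly (of_int :: int \<Rightarrow> rat) (G * H) = smult (of_int (d1 * d2)) (smult K (g * h))"
    unfolding map_of_int_mult G H by (simp add: algebra_simps)
  also have "\<dots> = map_poly of_int (smult (d1 * d2) F)"
    unfolding map_of_int_smult Ff fgh by simp
  finally have GH: "G * H = smult (d1 * d2) F" by (rule map_of_int_inj)
  have dd: "d1 * d2 \<noteq> 0" using G H by simp
  have dG: "degree G = k"
  proof -
    have "degree (map_poly (of_int :: int \<Rightarrow> rat) G) = degree G" by (simp add: degree_map_poly)
    thus ?thesis using G g by simp
  qed
  let ?nu = "multiplicity (int p)"
  have pe: "prime_elem (int p)" using p by simp
  have cR: "\<And>j. coeff (G * H) j = (d1 * d2) * coeff F j" using GH by simp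
  have nuR: "\<And>j. coeff F j \<noteq> 0 \<Longrightarrow> ?nu (coeff (G * H) j) = ?nu (d1 * d2) + ?nu (coeff F j)"
    unfolding cR using dd by (simp add: prime_elem_multiplicity_mult_distrib[OF pe])
  have nzR: "\<And>j. coeff (G * H) j \<noteq> 0 \<longleftrightarrow> coeff F j \<noteq> 0" unfolding cR using dd by simp
  show False
  proof (rule core[OF p k _ dG])
    show "degree (G * H) = n" using GH dd dF by simp
    show "coeff (G * H) 0 \<noteq> 0" using nzR F0 by blast
    show "\<forall>j\<ge>1. coeff (G * H) j \<noteq> 0 \<longrightarrow>
               k * ?nu (coeff (G * H) 0) < k * ?nu (coeff (G * H) j) + j"
      using Hw nzR nuR F0 by (simp add: algebra_simps)
    have Fn: "coeff F n \<noteq> 0" using dF F0 by (metis leading_coeff_0_iff coeff_0_degree_minus_1 degree_0)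
    show "\<forall>j\<le>n - k. coeff (G * H) j \<noteq> 0 \<longrightarrow> ?nu (coeff (G * H) n) < ?nu (coeff (G * H) j)"
      using Hn nzR nuR Fn by simp
  qed
qed



lemma nu_int:
  assumes p: "prime p" and x: "x \<noteq> 0"
  shows "multiplicity (int p) (int x) = multiplicity p x"
proof -
  let ?m = "multiplicity p x"
  have np: "\<not> is_unit p" using p prime_gt_1_nat by fastforce
  have a: "p ^ ?m dvd x" by (rule multiplicity_dvd)
  have b: "\<not> p ^ Suc ?m dvd x" using power_dvd_iff_le_multiplicity[OF x np, of "Suc ?m"] by simp
  show ?thesis
  proof (rule multiplicity_eqI)
    show "int p ^ ?m dvd int x" using a by (metis of_nat_dvd_iff of_nat_power)
    show "\<not> int p ^ Suc ?m dvd int x" using b by (metis of_nat_dvd_iff of_nat_power)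
  qed
qed

lemma prod_split:
  assumes "j \<le> n"
  shows "(\<Prod>i=1..n. a + i) = (\<Prod>i=1..j. a + i) * (\<Prod>i=1..n-j. a + j + i :: nat)"
proof -
  have "fact a * (\<Prod>i=1..n. a + i) = fact (a + n)" using fact_split[of a n] by simp
  also have "\<dots> = fact (a + j + (n - j))" using assms by simp
  also have "\<dots> = fact (a + j) * (\<Prod>i=1..n-j. a + j + i)" by (rule fact_split)
  also have "\<dots> = fact a * ((\<Prod>i=1..j. a + i) * (\<Prod>i=1..n-j. a + j + i))"
    using fact_split[of a j] by simp
  finally show ?thesis by simp
qed

lemma main_gen:
  fixes F :: "int poly" and f :: "rat poly" and b :: "nat \<Rightarrow> int" and n a :: nat
  defines "T \<equiv> (\<lambda>j. \<Prod>i=1..n-j. a + j + i :: nat)"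
  assumes Ff: "map_poly of_int F = smult K f" and K: "K \<noteq> 0"
    and Fdef: "F = (\<Sum>j\<le>n. monom (b j) j)"
    and p: "prime p" and k: "1 \<le> k" "k \<le> n" and pk: "k + 2 \<le> p"
    and nd: "\<forall>i\<in>{1..k}. \<not> p dvd a + i"
    and br: "2*a \<le> p*k \<or> k*k + a \<le> p*k \<or> (2*k < p \<and> a + p \<le> p*p)"
    and bform: "\<forall>j\<le>n. \<exists>e. b j = e * int (T j)"
    and b0: "b 0 = cz * int (T 0)" "\<not> int p dvd cz"
    and bn: "\<not> int p dvd b n"
    and dvdj: "\<forall>j\<le>n - k. int p dvd b j"
  shows "\<not> (\<exists>g. degree g = k \<and> g dvd f)"
proof (rule no_factor[OF Ff K p k])
  let ?nu = "multiplicity (int p)"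
  have cF: "\<And>m. coeff F m = (if m \<le> n then b m else 0)" unfolding Fdef by (simp add: coeff_sum)
  have bn0: "b n \<noteq> 0" using bn by auto
  show "degree F = n"
  proof (rule antisym)
    show "degree F \<le> n" by (rule degree_le) (simp add: cF)
    show "n \<le> degree F" by (rule le_degree) (simp add: cF bn0)
  qed
  have T0: "\<And>j. T j \<noteq> 0" unfolding T_def by simp
  have e00: "cz \<noteq> 0" using b0 by auto
  show F0: "coeff F 0 \<noteq> 0" using b0 T0 e00 by (simp add: cF)
  have pe: "prime_elem (int p)" using p by simp
  have nub0: "?nu (b 0) = multiplicity p (T 0)"
    using b0 e00 T0 by (simp add: prime_elem_multiplicity_mult_distrib[OF pe] nu_int[OF p]
        not_dvd_imp_multiplicity_0)
  show "\<forall>j\<ge>1. coeff F j \<noteq> 0 \<longrightarrow> k * ?nu (coeff F 0) < k * ?nu (coeff F j) + j"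
  proof (intro allI impI)
    fix j :: nat assume j: "1 \<le> j" and nz: "coeff F j \<noteq> 0"
    have jn: "j \<le> n" using nz by (simp add: cF split: if_splits)
    obtain e where e: "b j = e * int (T j)" using bform jn by blast
    have cz: "e \<noteq> 0" using nz jn e by (simp add: cF)
    have nubj: "multiplicity p (T j) \<le> ?nu (b j)"
      using e cz T0 by (simp add: prime_elem_multiplicity_mult_distrib[OF pe] nu_int[OF p])
    have sp: "T 0 = (\<Prod>i=1..j. a + i) * T j" unfolding T_def using prod_split[OF jn, of a] by simp
    have "multiplicity p (T 0) = multiplicity p (\<Prod>i=1..j. a + i) + multiplicity p (T j)"
      unfolding sp using T0 by (intro prime_elem_multiplicity_mult_distrib) (auto simp: p)
    moreover have "k * multiplicity p (\<Prod>i=1..j. a + i) < j" using nt_main[OF p k(1) pk nd br j] .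
    ultimately have "k * multiplicity p (T 0) < j + k * multiplicity p (T j)" by (simp add: algebra_simps)
    also have "\<dots> \<le> j + k * ?nu (b j)" using nubj by simp
    finally show "k * ?nu (coeff F 0) < k * ?nu (coeff F j) + j" using jn nub0 by (simp add: cF)
  qed
  show "\<forall>j\<le>n - k. coeff F j \<noteq> 0 \<longrightarrow> ?nu (coeff F n) < ?nu (coeff F j)"
  proof (intro allI impI)
    fix j assume j: "j \<le> n - k" and nz: "coeff F j \<noteq> 0"
    have bj: "b j \<noteq> 0" using nz by (simp add: cF split: if_splits)
    have "?nu (b n) = 0" using bn by (simp add: not_dvd_imp_multiplicity_0)
    moreover have "?nu (b j) > 0" using dvdj j bj pnu[OF p]
      by (simp add: multiplicity_gt_zero_iff)
    ultimately show "?nu (coeff F n) < ?nu (coeff F j)" using j k by (simp add: cF)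
  qed
qed



lemma binom_T:
  fixes n j a :: nat
  assumes j: "j \<le> n"
  shows "(n choose j) * (\<Prod>i=1..n-j. a + j + i) = (\<Prod>i=1..n-j. j + i) * ((n + a) choose (n - j))"
proof -
  let ?X = "fact j * fact (n - j) * fact (a + j) :: nat"
  have X0: "?X \<noteq> 0" by simp
  have e1: "fact j * fact (n - j) * (n choose j) = (fact n :: nat)" using binomial_fact_lemma[OF j] .
  have e2: "fact (a + j) * (\<Prod>i=1..n-j. a + j + i) = (fact (a + n) :: nat)"
    using fact_split[of "a + j" "n - j"] j by simp
  have e3: "fact j * (\<Prod>i=1..n-j. j + i) = (fact n :: nat)"
    using fact_split[of j "n - j"] j by simp
  have e4: "fact (n - j) * fact (n + a - (n - j)) * ((n + a) choose (n - j)) = (fact (n + a) :: nat)"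
    using binomial_fact_lemma[of "n - j" "n + a"] by simp
  have e4': "fact (n - j) * fact (a + j) * ((n + a) choose (n - j)) = (fact (n + a) :: nat)"
    using e4 j by (simp add: add.commute)
  have "(n choose j) * (\<Prod>i=1..n-j. a + j + i) * ?X =
     (fact j * fact (n - j) * (n choose j)) * (fact (a + j) * (\<Prod>i=1..n-j. a + j + i))"
    by (simp only: ac_simps)
  also have "\<dots> = fact n * fact (a + n)" by (simp only: e1 e2)
  finally have L: "(n choose j) * (\<Prod>i=1..n-j. a + j + i) * ?X = fact n * fact (a + n)" .
  have "(\<Prod>i=1..n-j. j + i) * ((n + a) choose (n - j)) * ?X =
     (fact j * (\<Prod>i=1..n-j. j + i)) * (fact (n - j) * fact (a + j) * ((n + a) choose (n - j)))"
    by (simp only: ac_simps)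
  also have "\<dots> = fact n * fact (n + a)" by (simp only: e3 e4')
  finally have R: "(\<Prod>i=1..n-j. j + i) * ((n + a) choose (n - j)) * ?X = fact n * fact (a + n)"
    by (simp add: add.commute)
  show ?thesis using L R using X0 by (metis mult_right_cancel)
qed

lemma T_dvd:
  fixes p n k a j i0 :: nat
  assumes j: "j \<le> n - k" and i0: "i0 \<in> {1..k}" and k: "k \<le> n" and d: "p dvd c + n - k + i0"
  shows "p dvd (\<Prod>i=1..n-j. c + j + i)"
proof -
  define i' where "i' = n - k + i0 - j"
  have i': "i' \<in> {1..n-j}" unfolding i'_def using j i0 k by auto
  have "c + j + i' = c + n - k + i0" unfolding i'_def using j i0 k by auto
  hence "p dvd c + j + i'" using d by simp
  also have "\<dots> dvd (\<Prod>i=1..n-j. c + j + i)" using i' by (intro dvd_prodI) auto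
  finally show ?thesis .
qed

lemma branch_conv:
  fixes p k a :: nat
  assumes k: "1 \<le> k"
    and br: "real p \<ge> min (2 * (real a / real k)) (real k + real a / real k) \<or> (p > 2 * k \<and> p ^ 2 - p \<ge> a)"
  shows "2*a \<le> p*k \<or> k*k + a \<le> p*k \<or> (2*k < p \<and> a + p \<le> p*p)"
proof -
  have kr: "real k > 0" using k by simp
  consider "2 * (real a / real k) \<le> real p" | "real k + real a / real k \<le> real p" | "p > 2 * k \<and> p ^ 2 - p \<ge> a"
    using br by linarith
  thus ?thesis
  proof cases
    case 1
    hence "2 * real a \<le> real p * real k" using kr by (simp add: field_simps)
    hence "2 * a \<le> p * k" by (simp flip: of_nat_mult of_nat_le_iff)
    thus ?thesis by simp
  next
    case 2
    hence "real k * real k + real a \<le> real p * real k" using kr by (simp add: field_simps)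
    hence "k * k + a \<le> p * k" by (simp flip: of_nat_mult of_nat_le_iff)
    thus ?thesis by simp
  next
    case 3
    have "p \<le> p * p" by (cases p) auto
    moreover have "a \<le> p * p - p" using 3 by (simp add: power2_eq_square)
    ultimately have "a + p \<le> p * p" by linarith
    thus ?thesis using 3 by simp
  qed
qed

lemma nd_conv:
  assumes "\<not> (p::nat) dvd (\<Prod>i=1..k. a + i)"
  shows "\<forall>i\<in>{1..k}. \<not> p dvd a + i"
proof (intro ballI notI)
  fix i assume "i \<in> {1..k}" "p dvd a + i"
  hence "p dvd (\<Prod>i=1..k. a + i)" by (meson dvd_prodI dvd_trans finite_atLeastAtMost)
  thus False using assms by blast
qed

lemma partA:
  fixes a n k :: nat and c :: "nat \<Rightarrow> int"
  assumes "1 \<le> k" and "2 * k \<le> n"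
    and p: "prime p" and pk: "p \<ge> k + 2"
    and d: "p dvd (\<Prod>i=1..k. a + n - k + i)"
    and cd: "\<not> int p dvd (c 0 * c n)"
    and nd0: "\<not> p dvd (\<Prod>i=1..k. a + i)"
    and br0: "real p \<ge> min (2 * (real a / real k)) (real k + real a / real k) \<or> (p > 2 * k \<and> p ^ 2 - p \<ge> a)"
  shows "\<not> (\<exists>g :: rat poly. degree g = k \<and> g dvd fna n a c)"
proof -
  define T where "T = (\<lambda>j. \<Prod>i=1..n-j. a + j + i :: nat)"
  define b where "b = (\<lambda>j. c j * int (T j))"
  have kn: "k \<le> n" using assms by simp
  obtain i0 where i0: "i0 \<in> {1..k}" "p dvd a + n - k + i0"
    using d p by (auto simp: prime_dvd_prod_iff)
  have c0: "\<not> int p dvd c 0" and cn: "\<not> int p dvd c n" using cd by auto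
  have Tn: "T n = 1" unfolding T_def by simp
  show ?thesis
  proof (rule main_gen[where n = n and a = a and b = b and cz = "c 0", OF _ _ _ p assms(1) kn pk
        nd_conv[OF nd0] branch_conv[OF assms(1) br0]])
    show "map_poly of_int (\<Sum>j\<le>n. monom (b j) j) = smult (fact (a + n)) (fna n a c)"
    proof (intro poly_eqI)
      fix m
      show "coeff (map_poly of_int (\<Sum>j\<le>n. monom (b j) j)) m = coeff (smult (fact (a + n)) (fna n a c)) m"
      proof (cases "m \<le> n")
        case False thus ?thesis by (simp add: coeff_map_poly coeff_sum fna_def)
      next
        case True
        have "fact (a + m) * T m = (fact (a + n) :: nat)"
          using fact_split[of "a + m" "n - m"] True unfolding T_def by simp
        hence fe: "(fact (a + n) :: rat) = fact (m + a) * of_nat (T m)"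
          by (metis add.commute of_nat_fact of_nat_mult)
        show ?thesis using True
          by (simp add: coeff_map_poly coeff_sum fna_def b_def fe field_simps)
      qed
    qed
    show "fact (a + n) \<noteq> (0::rat)" by simp
    show "\<forall>j\<le>n. \<exists>e. b j = e * int (\<Prod>i=1..n-j. a + j + i)" unfolding b_def T_def by blast
    show "b 0 = c 0 * int (\<Prod>i=1..n-0. a + 0 + i)" unfolding b_def T_def by simp
    show "\<not> int p dvd c 0" by fact
    show "\<not> int p dvd b n" unfolding b_def using Tn cn by simp
    show "\<forall>j\<le>n - k. int p dvd b j"
    proof (intro allI impI)
      fix j assume j: "j \<le> n - k"
      have "p dvd T j" unfolding T_def using T_dvd[OF j i0(1) kn, of p a] i0(2) by simp
      thus "int p dvd b j" unfolding b_def by (simp add: int_dvd_int_iff)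
    qed
  qed simp
qed



lemma lag_prod:
  assumes "m \<le> n"
  shows "(\<Prod>i\<in>{m+1..n}. (of_int (int i + int a) :: rat)) = of_nat (\<Prod>i=1..n-m. a + m + i)"
proof -
  have "(\<Prod>i\<in>{m+1..n}. (of_int (int i + int a) :: rat)) = (\<Prod>i\<in>{1+m..(n-m)+m}. of_nat (a + i))"
    using assms by (intro prod.cong) auto
  also have "\<dots> = (\<Prod>i\<in>{1..n-m}. of_nat (a + (i + m)))" by (rule prod.shift_bounds_cl_nat_ivl)
  also have "\<dots> = of_nat (\<Prod>i=1..n-m. a + m + i)" by (simp add: algebra_simps)
  finally show ?thesis .
qed

lemma partB:
  fixes a n k :: nat
  assumes "1 \<le> k" and "2 * k \<le> n"
    and p: "prime p" and pk: "p \<ge> k + 2"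
    and d: "p dvd (\<Prod>i=1..k. (n - k + i) * (a + n - k + i))"
    and nd0: "\<not> p dvd (\<Prod>i=1..k. a + i)"
    and br0: "real p \<ge> min (2 * (real a / real k)) (real k + real a / real k) \<or> (p > 2 * k \<and> p ^ 2 - p \<ge> a)"
  shows "\<not> (\<exists>g :: rat poly. degree g = k \<and> g dvd laguerre n (int a))"
proof -
  define T where "T = (\<lambda>j. \<Prod>i=1..n-j. a + j + i :: nat)"
  define b where "b = (\<lambda>j. (-1) ^ j * int (n choose j) * int (T j))"
  have kn: "k \<le> n" using assms by simp
  obtain i0 where i0: "i0 \<in> {1..k}" "p dvd (n - k + i0) * (a + n - k + i0)"
    using d p by (auto simp: prime_dvd_prod_iff)
  have p1: "\<not> int p dvd 1" using p prime_gt_1_nat by fastforce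
  have Tn: "T n = 1" unfolding T_def by simp
  show ?thesis
  proof (rule main_gen[where n = n and a = a and b = b and cz = 1, OF _ _ _ p assms(1) kn pk
        nd_conv[OF nd0] branch_conv[OF assms(1) br0]])
    show "map_poly of_int (\<Sum>j\<le>n. monom (b j) j) = smult (fact n) (laguerre n (int a))"
    proof (intro poly_eqI)
      fix m
      show "coeff (map_poly of_int (\<Sum>j\<le>n. monom (b j) j)) m = coeff (smult (fact n) (laguerre n (int a))) m"
      proof (cases "m \<le> n")
        case False thus ?thesis by (simp add: coeff_map_poly coeff_sum laguerre_def)
      next
        case True
        have lp: "(\<Prod>i\<in>{m+1..n}. (of_int (int i + int a) :: rat)) = of_nat (T m)"
          unfolding T_def using lag_prod[OF True] .
        have bf: "(of_nat (n choose m) :: rat) = fact n / (fact m * fact (n - m))"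
          using binomial_fact[OF True] .
        have "coeff (smult (fact n) (laguerre n (int a))) m =
              fact n * (of_nat (T m) / (fact (n - m) * fact m) * (-1) ^ m)"
          using True lp by (simp add: laguerre_def coeff_sum)
        also have "\<dots> = (-1) ^ m * of_nat (n choose m) * of_nat (T m)"
          unfolding bf by (simp add: field_simps)
        finally show ?thesis using True by (simp add: coeff_map_poly coeff_sum b_def)
      qed
    qed
    show "fact n \<noteq> (0::rat)" by simp
    show "\<forall>j\<le>n. \<exists>e. b j = e * int (\<Prod>i=1..n-j. a + j + i)" unfolding b_def T_def by blast
    show "b 0 = 1 * int (\<Prod>i=1..n-0. a + 0 + i)" unfolding b_def T_def by simp
    show "\<not> int p dvd 1" by (rule p1)
    show "\<not> int p dvd b n"
    proof
      assume "int p dvd b n"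
      hence "int p dvd (-1) ^ n" unfolding b_def using Tn by simp
      moreover have "((-1::int) ^ n) * (-1) ^ n = 1" by (simp flip: power_mult_distrib)
      hence "(-1::int) ^ n dvd 1" by (metis dvdI)
      ultimately have "int p dvd 1" by (rule dvd_trans)
      thus False using p1 by blast
    qed
    show "\<forall>j\<le>n - k. int p dvd b j"
    proof (intro allI impI)
      fix j assume j: "j \<le> n - k"
      have jn: "j \<le> n" using j by simp
      have "p dvd (n choose j) * T j"
      proof (cases "p dvd a + n - k + i0")
        case True
        hence "p dvd T j" unfolding T_def using T_dvd[OF j i0(1) kn, of p a] by simp
        thus ?thesis by simp
      next
        case False
        hence "p dvd 0 + n - k + i0" using i0(2) p by (simp add: prime_dvd_mult_iff)
        hence "p dvd (\<Prod>i=1..n-j. 0 + j + i)" using T_dvd[OF j i0(1) kn] by blast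
        hence "p dvd (\<Prod>i=1..n-j. j + i) * ((n + a) choose (n - j))" by simp
        thus ?thesis unfolding T_def binom_T[OF jn] .
      qed
      hence "int p dvd int ((n choose j) * T j)" by (simp only: int_dvd_int_iff)
      hence "int p dvd (-1) ^ j * (int (n choose j) * int (T j))" by simp
      thus "int p dvd b j" unfolding b_def by (simp only: mult.assoc)
    qed
  qed simp
qed


theorem lemma1p1:
  fixes a n k :: nat and c :: "nat \<Rightarrow> int"
  assumes "a > 0" and "1 \<le> k" and "2 * k \<le> n"
  shows "((\<exists>p::nat. prime p \<and> p \<ge> k + 2
            \<and> p dvd (\<Prod>i=1..k. a + n - k + i)
            \<and> \<not> int p dvd (c 0 * c n)
            \<and> \<not> p dvd (\<Prod>i=1..k. a + i)
            \<and> (real p \<ge> min (2 * (real a / real k)) (real k + real a / real k)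
               \<or> (p > 2 * k \<and> p ^ 2 - p \<ge> a)))
          \<longrightarrow> \<not> (\<exists>g :: rat poly. degree g = k \<and> g dvd fna n a c))
       \<and> ((\<exists>p::nat. prime p \<and> p \<ge> k + 2
            \<and> p dvd (\<Prod>i=1..k. (n - k + i) * (a + n - k + i))
            \<and> \<not> p dvd (\<Prod>i=1..k. a + i)
            \<and> (real p \<ge> min (2 * (real a / real k)) (real k + real a / real k)
               \<or> (p > 2 * k \<and> p ^ 2 - p \<ge> a)))
          \<longrightarrow> \<not> (\<exists>g :: rat poly. degree g = k \<and> g dvd laguerre n (int a)))"
proof (intro conjI impI)
  assume "\<exists>p::nat. prime p \<and> p \<ge> k + 2
            \<and> p dvd (\<Prod>i=1..k. a + n - k + i)
            \<and> \<not> int p dvd (c 0 * c n)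
            \<and> \<not> p dvd (\<Prod>i=1..k. a + i)
            \<and> (real p \<ge> min (2 * (real a / real k)) (real k + real a / real k)
               \<or> (p > 2 * k \<and> p ^ 2 - p \<ge> a))"
  then obtain p where h: "prime p" "p \<ge> k + 2" "p dvd (\<Prod>i=1..k. a + n - k + i)"
    "\<not> int p dvd (c 0 * c n)" "\<not> p dvd (\<Prod>i=1..k. a + i)"
    "real p \<ge> min (2 * (real a / real k)) (real k + real a / real k) \<or> (p > 2 * k \<and> p ^ 2 - p \<ge> a)"
    by blast
  show "\<not> (\<exists>g :: rat poly. degree g = k \<and> g dvd fna n a c)"
    by (rule partA[OF assms(2,3) h])
next
  assume "\<exists>p::nat. prime p \<and> p \<ge> k + 2
            \<and> p dvd (\<Prod>i=1..k. (n - k + i) * (a + n - k + i))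
            \<and> \<not> p dvd (\<Prod>i=1..k. a + i)
            \<and> (real p \<ge> min (2 * (real a / real k)) (real k + real a / real k)
               \<or> (p > 2 * k \<and> p ^ 2 - p \<ge> a))"
  then obtain p where h: "prime p" "p \<ge> k + 2" "p dvd (\<Prod>i=1..k. (n - k + i) * (a + n - k + i))"
    "\<not> p dvd (\<Prod>i=1..k. a + i)"
    "real p \<ge> min (2 * (real a / real k)) (real k + real a / real k) \<or> (p > 2 * k \<and> p ^ 2 - p \<ge> a)"
    by blast
  show "\<not> (\<exists>g :: rat poly. degree g = k \<and> g dvd laguerre n (int a))"
    by (rule partB[OF assms(2,3) h])
qed

end
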